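(* Let $G$ be a scheduling game on two related machines $M_1,M_2$ with speeds $s_1=1$ and $s_2=s\le 1$ and arbitrary priority lists $\pi_1,\pi_2$, in which either all jobs have positive deterioration, or all jobs have negative deterioration and are delay-averse (i.e. $a_i\le 1$ for all $i$). Run the following algorithm: first assign all jobs to $M_1$; then for $k=1,\dots,n$, the job $i$ with $\pi_2(i)=k$ performs a best-response move with respect to the current profile, i.e. it moves to $M_2$ if and only if this strictly decreases its completion time. Then the resulting profile is a pure Nash equilibrium of $G$.
   Context: Scheduling game: a finite set $N$ of $n\ge1$ jobs (players) and a set $M$ of machines. Machine $j$ has speed $s_j>0$ and a priority list $\pi_j$, a bijection $N\to\{1,\dots,n\}$; job $u$ has higher priority than $v$ on $j$ iff $\pi_j(u)<\pi_j(v)$. Each job $i$ has a processing-time function $p_i$: with positive deterioration $p_i(t)=b_i+a_it$ ($b_i,a_i\ge0$), with negative deterioration $p_i(t)=\max\{\tau_i,b_i-a_it\}$ ($b_i,a_i\ge0$, $\tau_i>0$). A profile $\sigma\in M^N$ assigns each job to a machine. On machine $j$, the jobs assigned to it, listed in increasing $\pi_j$-order as $i_1,i_2,\dots$, are processed without idle time: $S_{i_1}(\sigma)=0$, $C_{i_k}(\sigma)=S_{i_k}(\sigma)+p_{i_k}(S_{i_k}(\sigma))/s_j$, $S_{i_{k+1}}(\sigma)=C_{i_k}(\sigma)$. The cost of job $i$ is $C_i(\sigma)$. A pure Nash equilibrium (NE) is a profile in which no job can strictly decrease its completion time by unilaterally changing its machine. A job is delay-averse if it has positive deterioration, or negative deterioration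 with $a_i\le \max_j s_j$. *)

theory Defs
  imports Complex_Main
begin

text \<open>A profile is sigma :: 'j => 'm.  prio m :: 'j => nat is the
priority list of machine m (a bijection N -> {1..card N}; smaller value = higher
priority), sp m > 0 is the speed of machine m, and p i :: real => real is the
processing-time function of job i (depending on its start time).\<close>

definition predecessors ::
  "'j set \<Rightarrow> ('m \<Rightarrow> 'j \<Rightarrow> nat) \<Rightarrow> ('j \<Rightarrow> 'm) \<Rightarrow> 'j \<Rightarrow> 'j list" where
  "predecessors N prio sigma i =
     (let m = sigma i in
      map (the_inv_into N (prio m))
        (sorted_list_of_set (prio m ` {k \<in> N. sigma k = m \<and> prio m k < prio m i})))"

definition start_time ::
  "'j set \<Rightarrow> ('m \<Rightarrow> 'j \<Rightarrow> nat) \<Rightarrow> ('j \<Rightarrow> real \<Rightarrow> real) \<Rightarrow> ('m \<Rightarrow> real)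
    \<Rightarrow> ('j \<Rightarrow> 'm) \<Rightarrow> 'j \<Rightarrow> real" where
  "start_time N prio p sp sigma i =
     foldl (\<lambda>t k. t + p k t / sp (sigma i)) 0 (predecessors N prio sigma i)"

definition completion_time ::
  "'j set \<Rightarrow> ('m \<Rightarrow> 'j \<Rightarrow> nat) \<Rightarrow> ('j \<Rightarrow> real \<Rightarrow> real) \<Rightarrow> ('m \<Rightarrow> real)
    \<Rightarrow> ('j \<Rightarrow> 'm) \<Rightarrow> 'j \<Rightarrow> real" where
  "completion_time N prio p sp sigma i =
     (let S = start_time N prio p sp sigma i in S + p i S / sp (sigma i))"

definition is_NE ::
  "'j set \<Rightarrow> 'm set \<Rightarrow> ('m \<Rightarrow> 'j \<Rightarrow> nat) \<Rightarrow> ('j \<Rightarrow> real \<Rightarrow> real) \<Rightarrow> ('m \<Rightarrow> real)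
    \<Rightarrow> ('j \<Rightarrow> 'm) \<Rightarrow> bool" where
  "is_NE N M prio p sp sigma \<longleftrightarrow>
     (\<forall>i\<in>N. sigma i \<in> M) \<and>
     (\<forall>i\<in>N. \<forall>m\<in>M.
        completion_time N prio p sp sigma i \<le> completion_time N prio p sp (sigma(i := m)) i)"

primrec alg_profile ::
  "'j set \<Rightarrow> ('m \<Rightarrow> 'j \<Rightarrow> nat) \<Rightarrow> ('j \<Rightarrow> real \<Rightarrow> real) \<Rightarrow> ('m \<Rightarrow> real)
    \<Rightarrow> 'm \<Rightarrow> 'm \<Rightarrow> nat \<Rightarrow> ('j \<Rightarrow> 'm)" where
  "alg_profile N prio p sp m1 m2 0 = (\<lambda>_. m1)"
| "alg_profile N prio p sp m1 m2 (Suc k) =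
     (let sigma = alg_profile N prio p sp m1 m2 k;
          i = the_inv_into N (prio m2) (Suc k);
          sigma' = sigma(i := m2)
      in if completion_time N prio p sp sigma' i < completion_time N prio p sp sigma i
         then sigma' else sigma)"

end

theory Submission
  imports Defs
begin

lemma sl_append:
  assumes "finite A" "finite B" "\<forall>a\<in>A. \<forall>b\<in>B. a < b"
  shows "sorted_list_of_set (A \<union> B) = sorted_list_of_set A @ sorted_list_of_set (B::nat set)"
proof -
  have d: "A \<inter> B = {}" using assms(3) by fastforce
  have "sorted_wrt (<) (sorted_list_of_set A @ sorted_list_of_set B) \<and>
        set (sorted_list_of_set A @ sorted_list_of_set B) = A \<union> B \<and>
        length (sorted_list_of_set A @ sorted_list_of_set B) = card (A \<union> B)"
    using assms d by (auto simp: sorted_wrt_append card_Un_disjoint)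
  then show ?thesis using sorted_list_of_set_unique assms by (metis finite_UnI)
qed

lemma sl_split:
  assumes "finite K" "(r::nat) \<notin> K"
  shows "sorted_list_of_set K = sorted_list_of_set {y\<in>K. y<r} @ sorted_list_of_set {y\<in>K. r<y}"
    and "sorted_list_of_set (insert r K) = sorted_list_of_set {y\<in>K. y<r} @ r # sorted_list_of_set {y\<in>K. r<y}"
proof -
  have e1: "K = {y\<in>K. y<r} \<union> {y\<in>K. r<y}" using assms(2) by (auto, metis linorder_neqE_nat)
  show "sorted_list_of_set K = sorted_list_of_set {y\<in>K. y<r} @ sorted_list_of_set {y\<in>K. r<y}"
    by (subst e1, rule sl_append) (use assms in auto)
  have e2: "insert r K = {y\<in>K. y<r} \<union> ({r} \<union> {y\<in>K. r<y})" using assms(2) by auto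
  have "sorted_list_of_set ({r} \<union> {y\<in>K. r<y}) = sorted_list_of_set {r} @ sorted_list_of_set {y\<in>K. r<y}"
    by (rule sl_append) (use assms in auto)
  then show "sorted_list_of_set (insert r K) = sorted_list_of_set {y\<in>K. y<r} @ r # sorted_list_of_set {y\<in>K. r<y}"
    by (subst e2, subst sl_append) (use assms in auto)
qed

lemma sl_split_mem:
  assumes "finite K" "(r::nat) \<in> K"
  shows "sorted_list_of_set K = sorted_list_of_set {y\<in>K. y<r} @ r # sorted_list_of_set {y\<in>K. r<y}"
proof -
  have "K = insert r (K - {r})" using assms by auto
  moreover have "{y\<in>K. y<r} = {y\<in>K-{r}. y<r}" "{y\<in>K. r<y} = {y\<in>K-{r}. r<y}" by auto
  ultimately show ?thesis using sl_split(2)[of "K-{r}" r] assms by auto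
qed

lemma foldl_ge:
  assumes "\<forall>r\<in>set xs. \<forall>t\<ge>0. t \<le> f r t" "(0::real) \<le> t0"
  shows "t0 \<le> foldl (\<lambda>t r. f r t) t0 xs"
  using assms
proof (induction xs arbitrary: t0)
  case Nil then show ?case by simp
next
  case (Cons x xs)
  have "t0 \<le> f x t0" using Cons.prems by auto
  moreover have "f x t0 \<le> foldl (\<lambda>t r. f r t) (f x t0) xs"
    using Cons.IH[of "f x t0"] Cons.prems calculation by auto
  ultimately show ?case by simp
qed

lemma foldl_mono:
  assumes "\<forall>r\<in>set xs. \<forall>t\<ge>0. t \<le> f r t"
    "\<forall>r\<in>set xs. \<forall>t u. 0 \<le> t \<longrightarrow> t \<le> u \<longrightarrow> f r t \<le> f r u" "(0::real) \<le> t0" "t0 \<le> t1"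
  shows "foldl (\<lambda>t r. f r t) t0 xs \<le> foldl (\<lambda>t r. f r t) t1 xs"
  using assms
proof (induction xs arbitrary: t0 t1)
  case Nil then show ?case by simp
next
  case (Cons x xs)
  have "f x t0 \<le> f x t1" "0 \<le> f x t0" using Cons.prems by force+
  then show ?case using Cons.IH[of "f x t0" "f x t1"] Cons.prems by simp
qed

lemma chain_insert:
  assumes "finite (K::nat set)" "r \<notin> K" "\<forall>r\<in>insert r K. \<forall>t\<ge>0. t \<le> f r t"
    "\<forall>r\<in>insert r K. \<forall>t u. 0 \<le> t \<longrightarrow> t \<le> u \<longrightarrow> f r t \<le> f r u"
  shows "foldl (\<lambda>t r. f r t) (0::real) (sorted_list_of_set K)
       \<le> foldl (\<lambda>t r. f r t) 0 (sorted_list_of_set (insert r K))"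
proof -
  let ?A = "sorted_list_of_set {y\<in>K. y<r}" and ?B = "sorted_list_of_set {y\<in>K. r<y}"
  let ?F = "foldl (\<lambda>t r. f r t)"
  have sA: "set ?A \<subseteq> K" "set ?B \<subseteq> K" using assms(1) by auto
  have z: "0 \<le> ?F 0 ?A" using foldl_ge[of ?A f 0] assms sA by auto
  have "?F 0 (sorted_list_of_set K) = ?F (?F 0 ?A) ?B" using sl_split(1)[OF assms(1,2)] by simp
  also have "\<dots> \<le> ?F (f r (?F 0 ?A)) ?B"
    by (rule foldl_mono) (use assms sA z in auto)
  also have "\<dots> = ?F 0 (sorted_list_of_set (insert r K))" using sl_split(2)[OF assms(1,2)] by simp
  finally show ?thesis .
qed

lemma chain_sub:
  assumes "finite (K'::nat set)" "K \<subseteq> K'" "\<forall>r\<in>K'. \<forall>t\<ge>0. t \<le> f r t"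
    "\<forall>r\<in>K'. \<forall>t u. 0 \<le> t \<longrightarrow> t \<le> u \<longrightarrow> f r t \<le> f r u"
  shows "foldl (\<lambda>t r. f r t) (0::real) (sorted_list_of_set K)
       \<le> foldl (\<lambda>t r. f r t) 0 (sorted_list_of_set K')"
proof -
  have "finite (K' - K)" using assms(1) by auto
  then have "K \<union> D \<subseteq> K' \<longrightarrow> foldl (\<lambda>t r. f r t) (0::real) (sorted_list_of_set K)
       \<le> foldl (\<lambda>t r. f r t) 0 (sorted_list_of_set (K \<union> D))" if "D = K' - K" for D
    using that
  proof -
    have "finite D" using that assms(1) by auto
    then show ?thesis
    proof (induction D rule: finite_induct)
      case empty then show ?case by simp
    next
      case (insert x F)
      show ?case
      proof
        assume sub: "K \<union> insert x F \<subseteq> K'"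
        show "foldl (\<lambda>t r. f r t) (0::real) (sorted_list_of_set K)
       \<le> foldl (\<lambda>t r. f r t) 0 (sorted_list_of_set (K \<union> insert x F))"
        proof (cases "x \<in> K \<union> F")
          case True
          then have "K \<union> insert x F = K \<union> F" by auto
          then show ?thesis using insert sub by auto
        next
          case False
          have fin: "finite (K \<union> F)" using sub assms(1) finite_subset by auto
          have "foldl (\<lambda>t r. f r t) 0 (sorted_list_of_set (K \<union> F))
             \<le> foldl (\<lambda>t r. f r t) 0 (sorted_list_of_set (insert x (K \<union> F)))"
            by (rule chain_insert) (use fin False assms sub in auto)
          then show ?thesis using insert sub by auto
        qed
      qed
    qed
  qed
  moreover have "K \<union> (K' - K) = K'" using assms(2) by auto
  ultimately show ?thesis by (metis order_refl)
qed


definition FF :: "'j set \<Rightarrow> ('m \<Rightarrow> 'j \<Rightarrow> nat) \<Rightarrow> ('j \<Rightarrow> real \<Rightarrow> real) \<Rightarrow> ('m \<Rightarrow> real) \<Rightarrow> 'm \<Rightarrow> nat set \<Rightarrow> real" where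
  "FF N prio p sp m K = foldl (\<lambda>t r. t + p (the_inv_into N (prio m) r) t / sp m) 0 (sorted_list_of_set K)"

definition QQ :: "'j set \<Rightarrow> ('m \<Rightarrow> 'j \<Rightarrow> nat) \<Rightarrow> ('j \<Rightarrow> 'm) \<Rightarrow> 'm \<Rightarrow> 'j \<Rightarrow> nat set" where
  "QQ N prio sigma m x = prio m ` {k\<in>N. sigma k = m \<and> prio m k < prio m x}"

definition CM :: "'j set \<Rightarrow> ('m \<Rightarrow> 'j \<Rightarrow> nat) \<Rightarrow> ('j \<Rightarrow> real \<Rightarrow> real) \<Rightarrow> ('m \<Rightarrow> real) \<Rightarrow> ('j \<Rightarrow> 'm) \<Rightarrow> 'm \<Rightarrow> 'j \<Rightarrow> real" where
  "CM N prio p sp sigma m x = FF N prio p sp m (QQ N prio sigma m x) + p x (FF N prio p sp m (QQ N prio sigma m x)) / sp m"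

lemma ct_upd: "completion_time N prio p sp (sigma(x:=m)) x = CM N prio p sp sigma m x"
proof -
  have "{k \<in> N. (sigma(x:=m)) k = m \<and> prio m k < prio m x} = {k\<in>N. sigma k = m \<and> prio m k < prio m x}"
    by auto
  then show ?thesis
    unfolding completion_time_def start_time_def predecessors_def CM_def FF_def QQ_def Let_def
    by (simp add: foldl_map)
qed

lemma ct_self: "completion_time N prio p sp sigma x = CM N prio p sp sigma (sigma x) x"
  using ct_upd[of N prio p sp sigma x "sigma x"] by simp


theorem theorem2:
  fixes N :: "'j set" and prio :: "nat \<Rightarrow> 'j \<Rightarrow> nat"
    and p :: "'j \<Rightarrow> real \<Rightarrow> real" and a b tau :: "'j \<Rightarrow> real"
    and sp :: "nat \<Rightarrow> real" and s :: real
  assumes "finite N" and "N \<noteq> {}"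
    and "bij_betw (prio 1) N {1..card N}" and "bij_betw (prio 2) N {1..card N}"
    and "sp 1 = 1" and "sp 2 = s" and "0 < s" and "s \<le> 1"
    and "\<forall>i\<in>N. 0 \<le> a i \<and> 0 \<le> b i"
    and "(\<forall>i\<in>N. p i = (\<lambda>t. b i + a i * t))
         \<or> (\<forall>i\<in>N. 0 < tau i \<and> a i \<le> 1 \<and> p i = (\<lambda>t. max (tau i) (b i - a i * t)))"
  shows "is_NE N {1, 2} prio p sp (alg_profile N prio p sp 1 2 (card N))"
proof -
  note fin = assms(1)
  have H0: "\<forall>i\<in>N. \<forall>t\<ge>0. 0 \<le> p i t"
    using assms(9,10) by (auto simp: max_def)
  have H2: "\<forall>i\<in>N. \<forall>t u. 0 \<le> t \<longrightarrow> t \<le> u \<longrightarrow> t + p i t \<le> u + p i u"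
  proof (intro ballI allI impI)
    fix i and t u :: real assume i: "i \<in> N" and t: "0 \<le> t" "t \<le> u"
    have ai: "0 \<le> a i" using assms(9) i by auto
    show "t + p i t \<le> u + p i u"
      using assms(10)
    proof
      assume "\<forall>i\<in>N. p i = (\<lambda>t. b i + a i * t)"
      then show ?thesis using i t ai mult_left_mono[of t u "a i"] by auto
    next
      assume h: "\<forall>i\<in>N. 0 < tau i \<and> a i \<le> 1 \<and> p i = (\<lambda>t. max (tau i) (b i - a i * t))"
      then have "a i * (u - t) \<le> 1 * (u - t)" using i t by (intro mult_right_mono) auto
      then show ?thesis using h i t by (auto simp: max_def algebra_simps)
    qed
  qed
  have inj1: "inj_on (prio 1) N" and inj2: "inj_on (prio 2) N"
    using assms(3,4) bij_betw_def by blast+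
  have gN: "the_inv_into N (prio m) r \<in> N" if "m \<in> {1,2}" "r \<in> prio m ` N" for m r
    using that inj1 inj2 the_inv_into_into by fastforce
  have spp: "0 < sp m" "sp m \<le> 1" if "m \<in> {1,2::nat}" for m using that assms(5-8) by auto
  have infl: "\<forall>r\<in>prio m ` N. \<forall>t\<ge>0. t \<le> t + p (the_inv_into N (prio m) r) t / sp m"
    if "m \<in> {1,2}" for m
    using gN[OF that] H0 spp[OF that] by auto
  have mon1: "\<forall>r\<in>prio 1 ` N. \<forall>t u. 0 \<le> t \<longrightarrow> t \<le> u \<longrightarrow>
      t + p (the_inv_into N (prio 1) r) t / sp 1 \<le> u + p (the_inv_into N (prio 1) r) u / sp 1"
    using gN[of 1] H2 assms(5) by auto
  have Qsub: "QQ N prio sigma m x \<subseteq> prio m ` N" for sigma m x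
    unfolding QQ_def by auto
  have Qfin: "finite (QQ N prio sigma m x)" for sigma m x
    unfolding QQ_def using fin by simp
  have FF0: "0 \<le> FF N prio p sp m K" if "m \<in> {1,2}" "K \<subseteq> prio m ` N" "finite K" for m K
    unfolding FF_def
    by (rule foldl_ge[of _ "\<lambda>r t. t + p (the_inv_into N (prio m) r) t / sp m", simplified])
       (use infl[OF that(1)] that in auto)
  have FFsub1: "FF N prio p sp 1 K \<le> FF N prio p sp 1 K'" if "K \<subseteq> K'" "K' \<subseteq> prio 1 ` N" for K K'
  proof -
    have "finite K'" using that fin finite_subset by blast
    moreover have "\<forall>r\<in>K'. \<forall>t\<ge>0. t \<le> t + p (the_inv_into N (prio 1) r) t / sp 1"
      using that(2) infl[of 1] by blast
    moreover have "\<forall>r\<in>K'. \<forall>t u. 0 \<le> t \<longrightarrow> t \<le> u \<longrightarrow>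
      t + p (the_inv_into N (prio 1) r) t / sp 1 \<le> u + p (the_inv_into N (prio 1) r) u / sp 1"
      using that(2) mon1 by blast
    ultimately show ?thesis unfolding FF_def
      using chain_sub[of K' K "\<lambda>r t. t + p (the_inv_into N (prio 1) r) t / sp 1"] that(1) by simp
  qed
  have split2: "CM N prio p sp sigma 2 x \<le> FF N prio p sp 2 K"
    if "finite K" "K \<subseteq> prio 2 ` N" "x \<in> N" "prio 2 x \<in> K" "{y\<in>K. y < prio 2 x} = QQ N prio sigma 2 x"
    for sigma x K
  proof -
    let ?f = "\<lambda>r t. t + p (the_inv_into N (prio 2) r) t / sp 2"
    let ?A = "sorted_list_of_set {y\<in>K. y < prio 2 x}" and ?B = "sorted_list_of_set {y\<in>K. prio 2 x < y}"
    have gx: "the_inv_into N (prio 2) (prio 2 x) = x" using the_inv_into_f_f inj2 that(3) by metis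
    have z: "0 \<le> FF N prio p sp 2 (QQ N prio sigma 2 x)" using FF0[of 2] Qsub Qfin by auto
    have "FF N prio p sp 2 K = foldl (\<lambda>t r. ?f r t) (?f (prio 2 x) (foldl (\<lambda>t r. ?f r t) 0 ?A)) ?B"
      unfolding FF_def using sl_split_mem[OF that(1,4)] by simp
    also have "\<dots> = foldl (\<lambda>t r. ?f r t) (CM N prio p sp sigma 2 x) ?B"
      unfolding CM_def FF_def using that(5) gx by simp
    finally have e: "FF N prio p sp 2 K = foldl (\<lambda>t r. ?f r t) (CM N prio p sp sigma 2 x) ?B" .
    have "0 \<le> CM N prio p sp sigma 2 x" unfolding CM_def using z H0 that(3) spp[of 2] by auto
    then have "CM N prio p sp sigma 2 x \<le> foldl (\<lambda>t r. ?f r t) (CM N prio p sp sigma 2 x) ?B"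
      by (intro foldl_ge) (use that(1,2) infl[of 2] in auto)
    then show ?thesis using e by simp
  qed
  have CMge: "FF N prio p sp m (QQ N prio sigma m x) \<le> CM N prio p sp sigma m x"
    if "m \<in> {1,2}" "x \<in> N" for m sigma x
    unfolding CM_def using FF0[OF that(1) Qsub Qfin] H0 that(2) spp[OF that(1)] by auto
  have CM1mono: "CM N prio p sp sigma' 1 x \<le> CM N prio p sp sigma 1 x"
    if "QQ N prio sigma' 1 x \<subseteq> QQ N prio sigma 1 x" "x \<in> N" for sigma sigma' x
  proof -
    have le: "FF N prio p sp 1 (QQ N prio sigma' 1 x) \<le> FF N prio p sp 1 (QQ N prio sigma 1 x)"
      by (rule FFsub1[OF that(1) Qsub])
    have z: "0 \<le> FF N prio p sp 1 (QQ N prio sigma' 1 x)" using FF0[of 1] Qsub Qfin by simp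
    have "FF N prio p sp 1 (QQ N prio sigma' 1 x) + p x (FF N prio p sp 1 (QQ N prio sigma' 1 x))
       \<le> FF N prio p sp 1 (QQ N prio sigma 1 x) + p x (FF N prio p sp 1 (QQ N prio sigma 1 x))"
      by (rule H2[rule_format, OF that(2) z le])
    then show ?thesis unfolding CM_def using assms(5) by simp
  qed
  define n where "n = card N"
  define sg where "sg t = alg_profile N prio p sp 1 2 t" for t
  define Inv where "Inv t \<longleftrightarrow>
     (\<forall>x\<in>N. sg t x \<in> {1,2}) \<and> (\<forall>x\<in>N. sg t x = 2 \<longrightarrow> prio 2 x \<le> t) \<and>
     (\<forall>x\<in>N. sg t x = 2 \<longrightarrow> CM N prio p sp (sg t) 2 x \<le> CM N prio p sp (sg t) 1 x) \<and>
     (\<forall>x\<in>N. sg t x = 1 \<and> prio 2 x \<le> t \<longrightarrow> CM N prio p sp (sg t) 1 x \<le> CM N prio p sp (sg t) 2 x)" for t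
  have "Inv t" if "t \<le> n" for t
    using that
  proof (induction t)
    case 0
    have "1 \<le> prio 2 x" if "x \<in> N" for x using assms(4) that unfolding bij_betw_def by auto
    then show ?case unfolding Inv_def sg_def by fastforce
  next
    case (Suc t)
    have IH: "Inv t" using Suc by auto
    define sig where "sig = sg t"
    define i where "i = the_inv_into N (prio 2) (Suc t)"
    have iN: "i \<in> N" and pi: "prio 2 i = Suc t"
      using Suc.prems assms(4) unfolding i_def n_def
      by (auto intro: the_inv_into_into f_the_inv_into_f_bij_betw simp: bij_betw_def)
    have si: "sig i = 1" using IH iN pi unfolding Inv_def sig_def by fastforce
    define sig' where "sig' = sig(i := 2)"
    have e1: "completion_time N prio p sp sig i = CM N prio p sp sig 1 i"
      by (simp only: ct_self si)
    have e2: "completion_time N prio p sp sig' i = CM N prio p sp sig 2 i"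
      unfolding sig'_def by (rule ct_upd)
    have "sg (Suc t) = (if completion_time N prio p sp sig' i < completion_time N prio p sp sig i then sig' else sig)"
      unfolding sg_def sig_def sig'_def i_def by (simp only: alg_profile.simps Let_def)
    then have sgS: "sg (Suc t) = (if CM N prio p sp sig 2 i < CM N prio p sp sig 1 i then sig' else sig)"
      by (simp only: e1 e2)
    show ?case
    proof (cases "CM N prio p sp sig 2 i < CM N prio p sp sig 1 i")
      case False
      have "x = i" if "x \<in> N" "prio 2 x = Suc t" for x
        using inj2 that iN pi inj_on_def by metis
      note xi = this
      have sS: "sg (Suc t) = sig" using False sgS by simp
      have I4: "\<forall>x\<in>N. sig x = 1 \<and> prio 2 x \<le> Suc t \<longrightarrow> CM N prio p sp sig 1 x \<le> CM N prio p sp sig 2 x"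
      proof (intro ballI impI)
        fix x assume x: "x \<in> N" "sig x = 1 \<and> prio 2 x \<le> Suc t"
        show "CM N prio p sp sig 1 x \<le> CM N prio p sp sig 2 x"
        proof (cases "prio 2 x = Suc t")
          case True
          then have "x = i" using xi x by blast
          then show ?thesis using False by simp
        next
          case False
          then have "prio 2 x \<le> t" using x by simp
          then show ?thesis using IH x unfolding Inv_def sig_def by blast
        qed
      qed
      have "\<forall>x\<in>N. sig x = 2 \<longrightarrow> prio 2 x \<le> Suc t" using IH unfolding Inv_def sig_def
        by (meson le_SucI)
      then show ?thesis using IH I4 unfolding Inv_def sS sig_def by blast
    next
      case True
      have sS: "sg (Suc t) = sig'" using True sgS by simp
      have Qi: "QQ N prio sig' m i = QQ N prio sig m i" for m
        unfolding QQ_def sig'_def by auto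
      have Q2: "QQ N prio sig' 2 x = QQ N prio sig 2 x" if "prio 2 x \<le> t" for x
        unfolding QQ_def sig'_def using that pi by auto
      have Q1a: "QQ N prio sig' 1 x = QQ N prio sig 1 x" if "prio 1 x < prio 1 i" for x
        unfolding QQ_def sig'_def using that by auto
      have Q1b: "QQ N prio sig' 1 x \<subseteq> QQ N prio sig 1 x" for x
        unfolding QQ_def sig'_def by auto
      have A: "\<forall>x\<in>N. sig' x \<in> {1,2}" using IH unfolding Inv_def sig_def sig'_def by auto
      have B: "\<forall>x\<in>N. sig' x = 2 \<longrightarrow> prio 2 x \<le> Suc t" using IH pi unfolding Inv_def sig_def sig'_def by auto
      have D: "\<forall>x\<in>N. sig' x = 1 \<and> prio 2 x \<le> Suc t \<longrightarrow> CM N prio p sp sig' 1 x \<le> CM N prio p sp sig' 2 x"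
      proof (intro ballI impI)
        fix x assume x: "x \<in> N" "sig' x = 1 \<and> prio 2 x \<le> Suc t"
        then have xi0: "x \<noteq> i" "sig x = 1" unfolding sig'_def by (auto split: if_splits)
        have "prio 2 x \<noteq> Suc t" using xi0(1) x(1) inj2 iN pi inj_on_def by metis
        then have xi: "x \<noteq> i" "sig x = 1" "prio 2 x \<le> t" using xi0 x by auto
        have "CM N prio p sp sig' 1 x \<le> CM N prio p sp sig 1 x" using CM1mono Q1b x by blast
        also have "\<dots> \<le> CM N prio p sp sig 2 x" using IH x xi unfolding Inv_def sig_def by auto
        also have "\<dots> = CM N prio p sp sig' 2 x" using Q2[OF xi(3)] unfolding CM_def by simp
        finally show "CM N prio p sp sig' 1 x \<le> CM N prio p sp sig' 2 x" .
      qed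
      have Cc: "\<forall>x\<in>N. sig' x = 2 \<longrightarrow> CM N prio p sp sig' 2 x \<le> CM N prio p sp sig' 1 x"
      proof (intro ballI impI)
        fix x assume x: "x \<in> N" "sig' x = 2"
        show "CM N prio p sp sig' 2 x \<le> CM N prio p sp sig' 1 x"
        proof (cases "x = i")
          case True
          then show ?thesis using \<open>CM N prio p sp sig 2 i < CM N prio p sp sig 1 i\<close> Qi unfolding CM_def by simp
        next
          case False
          have xs: "sig x = 2" "prio 2 x \<le> t" using x False IH unfolding sig'_def Inv_def sig_def by auto
          have e2: "CM N prio p sp sig' 2 x = CM N prio p sp sig 2 x" using Q2[OF xs(2)] unfolding CM_def by simp
          have p1: "prio 1 x \<noteq> prio 1 i" using inj1 False x(1) iN inj_on_def by metis
          show ?thesis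
          proof (cases "prio 1 x < prio 1 i")
            case True
            then show ?thesis using e2 Q1a[OF True] IH x xs unfolding CM_def Inv_def sig_def by auto
          next
            case False
            then have lt: "prio 1 i < prio 1 x" using p1 by auto
            define S where "S = FF N prio p sp 1 (QQ N prio sig 1 i)"
            define S2 where "S2 = FF N prio p sp 2 (QQ N prio sig 2 i)"
            have S0: "0 \<le> S" unfolding S_def using FF0[of 1] Qsub Qfin by auto
            have S20: "0 \<le> S2" unfolding S2_def using FF0[of 2] Qsub Qfin by auto
            have "S2 \<le> S"
            proof (rule ccontr)
              assume "\<not> S2 \<le> S"
              then have "S + p i S \<le> S2 + p i S2" using H2 iN S0 by auto
              also have "p i S2 \<le> p i S2 / s" using H0 iN S20 assms(7,8)
                by (simp add: le_divide_eq mult_left_le)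
              finally have "S + p i S \<le> S2 + p i S2 / s" by simp
              moreover have "CM N prio p sp sig 2 i < CM N prio p sp sig 1 i" by fact
              ultimately show False unfolding CM_def S_def S2_def using assms(5,6) by simp
            qed
            have "CM N prio p sp sig 2 x \<le> S2" unfolding S2_def
            proof (rule split2)
              show "finite (QQ N prio sig 2 i)" by (rule Qfin)
              show "QQ N prio sig 2 i \<subseteq> prio 2 ` N" by (rule Qsub)
              show "x \<in> N" by fact
              show "prio 2 x \<in> QQ N prio sig 2 i" unfolding QQ_def using x xs pi by auto
              show "{y \<in> QQ N prio sig 2 i. y < prio 2 x} = QQ N prio sig 2 x"
                unfolding QQ_def using xs pi by auto
            qed
            also have "\<dots> \<le> S" by fact
            also have "S \<le> FF N prio p sp 1 (QQ N prio sig' 1 x)" unfolding S_def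
            proof (rule FFsub1)
              show "QQ N prio sig 1 i \<subseteq> QQ N prio sig' 1 x"
                unfolding QQ_def sig'_def using lt by auto
              show "QQ N prio sig' 1 x \<subseteq> prio 1 ` N" by (rule Qsub)
            qed
            also have "\<dots> \<le> CM N prio p sp sig' 1 x" using CMge[of 1] x by auto
            finally show ?thesis using e2 by simp
          qed
        qed
      qed
      show ?thesis unfolding Inv_def sS using A B Cc D by blast
    qed
  qed
  then have I: "Inv n" by simp
  have bnd: "prio 2 x \<le> n" if "x \<in> N" for x
    using assms(4) that unfolding n_def bij_betw_def by auto
  show ?thesis
    unfolding is_NE_def
  proof (intro conjI ballI)
    fix x assume "x \<in> N"
    then show "alg_profile N prio p sp 1 2 (card N) x \<in> {1,2}" using I unfolding Inv_def sg_def n_def by auto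
  next
    fix x m assume x: "x \<in> N" and m: "m \<in> {1,2::nat}"
    have "CM N prio p sp (sg n) (sg n x) x \<le> CM N prio p sp (sg n) m x"
      using I x m bnd[OF x] unfolding Inv_def by auto
    then show "completion_time N prio p sp (alg_profile N prio p sp 1 2 (card N)) x
         \<le> completion_time N prio p sp ((alg_profile N prio p sp 1 2 (card N))(x := m)) x"
      unfolding sg_def n_def ct_upd[of N prio p sp "alg_profile N prio p sp 1 2 (card N)" x m]
        ct_self[of N prio p sp "alg_profile N prio p sp 1 2 (card N)" x] .
  qed
qed

end
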